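(* Let $G=(V,E)$ be a simple graph with $n=|V|$ nodes and minimum degree $d$, where $d$ is a constant independent of $n$. Let $l$ be an integer in $[1,d-1]$ and let $\phi>\frac{l}{d}$ be a fixed uniform threshold. Let $S\subseteq V$ be a uniformly random subset of size $k=o(n^{\frac{l}{l+1}})$. Then $$\Pr_{S}\left[\mathrm{inf}^\phi_G(S)=S\right]=1-o(1)$$ as $n\to\infty$.
   Context: A simple graph has no multi-edges and no self-loops. Uniform threshold cascading with threshold $\phi$: given an initial set $S$, all nodes of $S$ are infected; repeatedly, a not-yet-infected node becomes infected if at least a $\phi$ fraction of its neighbors are infected. The final infected set is $\mathrm{inf}^\phi_G(S)$. *)

theory Defs
  imports Complex_Main "HOL-Library.Landau_Symbols"
begin

definition simple_graph :: "'a set \<Rightarrow> ('a \<Rightarrow> 'a \<Rightarrow> bool) \<Rightarrow> bool" where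
  "simple_graph V E \<longleftrightarrow> finite V \<and> (\<forall>u\<in>V. \<forall>v\<in>V. E u v \<longrightarrow> E v u) \<and> (\<forall>v\<in>V. \<not> E v v)"

definition nbrs :: "'a set \<Rightarrow> ('a \<Rightarrow> 'a \<Rightarrow> bool) \<Rightarrow> 'a \<Rightarrow> 'a set" where
  "nbrs V E v = {u \<in> V. E v u}"

definition degree :: "'a set \<Rightarrow> ('a \<Rightarrow> 'a \<Rightarrow> bool) \<Rightarrow> 'a \<Rightarrow> nat" where
  "degree V E v = card (nbrs V E v)"

definition min_degree :: "'a set \<Rightarrow> ('a \<Rightarrow> 'a \<Rightarrow> bool) \<Rightarrow> nat \<Rightarrow> bool" where
  "min_degree V E d \<longleftrightarrow> (\<forall>v\<in>V. d \<le> degree V E v) \<and> (\<exists>v\<in>V. degree V E v = d)"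

definition cascade_step :: "'a set \<Rightarrow> ('a \<Rightarrow> 'a \<Rightarrow> bool) \<Rightarrow> real \<Rightarrow> 'a set \<Rightarrow> 'a set" where
  "cascade_step V E \<phi> T = T \<union> {v \<in> V. \<phi> * real (degree V E v) \<le> real (card (nbrs V E v \<inter> T))}"

definition infected :: "'a set \<Rightarrow> ('a \<Rightarrow> 'a \<Rightarrow> bool) \<Rightarrow> real \<Rightarrow> 'a set \<Rightarrow> 'a set" where
  "infected V E \<phi> S = (\<Union>i. (cascade_step V E \<phi> ^^ i) S)"

definition no_spread_prob :: "'a set \<Rightarrow> ('a \<Rightarrow> 'a \<Rightarrow> bool) \<Rightarrow> real \<Rightarrow> nat \<Rightarrow> real" where
  "no_spread_prob V E \<phi> k =
     real (card {S. S \<subseteq> V \<and> card S = k \<and> infected V E \<phi> S = S})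
     / real (card {S. S \<subseteq> V \<and> card S = k})"

end

theory Submission
  imports Defs
begin


lemma choose_ratio:
  "j \<le> k \<Longrightarrow> k \<le> n \<Longrightarrow> ((n - j) choose (k - j)) * n ^ j \<le> k ^ j * (n choose k)"
proof (induction j arbitrary: n k)
  case 0 then show ?case by simp
next
  case (Suc j)
  then obtain n' k' where nk: "n = Suc n'" "k = Suc k'" by (metis Suc_le_D le_trans)
  have jk: "j \<le> k'" "k' \<le> n'" using Suc.prems nk by auto
  define X where "X = (n' - j) choose (k' - j)"
  have IH: "X * n' ^ j \<le> k' ^ j * (n' choose k')" using Suc.IH[OF jk] X_def by simp
  have eq: "n * (n' choose k') = (n choose k) * k" using Suc_times_binomial_eq nk by simp
  have key: "X * n ^ j \<le> k ^ j * (n' choose k')"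
  proof (cases "n' = 0")
    case True then show ?thesis using jk X_def nk by simp
  next
    case False
    have a: "n * k' \<le> k * n'" using jk nk by (simp add: algebra_simps)
    have b: "(n * k') ^ j \<le> (k * n') ^ j" using a power_mono by blast
    have "X * n ^ j * n' ^ j = (X * n' ^ j) * n ^ j" by simp
    also have "\<dots> \<le> k' ^ j * (n' choose k') * n ^ j" using IH by simp
    also have "\<dots> = (n * k') ^ j * (n' choose k')" by (simp add: power_mult_distrib)
    also have "\<dots> \<le> (k * n') ^ j * (n' choose k')" using b by simp
    also have "\<dots> = k ^ j * (n' choose k') * n' ^ j" by (simp add: power_mult_distrib)
    finally show ?thesis using False by simp
  qed
  have "((n - Suc j) choose (k - Suc j)) * n ^ Suc j = X * n ^ j * n"
    using nk X_def by (simp only: diff_Suc_Suc power_Suc mult_ac)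
  also have "\<dots> \<le> k ^ j * (n' choose k') * n" using key by simp
  also have "\<dots> = k ^ j * ((n choose k) * k)" using eq by (simp add: mult_ac)
  also have "\<dots> = k ^ Suc j * (n choose k)" by simp
  finally show ?case .
qed

lemma count_superset:
  assumes "finite V" "T \<subseteq> V" "card T = j" "j \<le> k"
  shows "card {S. S \<subseteq> V \<and> card S = k \<and> T \<subseteq> S} = (card V - j) choose (k - j)"
proof -
  have fT: "finite T" using assms finite_subset by blast
  have "bij_betw (\<lambda>S. S - T) {S. S \<subseteq> V \<and> card S = k \<and> T \<subseteq> S} {U. U \<subseteq> V - T \<and> card U = k - j}"
  proof (rule bij_betw_byWitness[where f'="\<lambda>U. U \<union> T"])
    show "\<forall>S\<in>{S. S \<subseteq> V \<and> card S = k \<and> T \<subseteq> S}. S - T \<union> T = S" by blast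
    show "\<forall>U\<in>{U. U \<subseteq> V - T \<and> card U = k - j}. U \<union> T - T = U" by blast
    show "(\<lambda>S. S - T) ` {S. S \<subseteq> V \<and> card S = k \<and> T \<subseteq> S} \<subseteq> {U. U \<subseteq> V - T \<and> card U = k - j}"
    proof clarify
      fix S assume S: "S \<subseteq> V" "T \<subseteq> S" "k = card S"
      have "card (S - T) = card S - card T" using S fT by (intro card_Diff_subset) auto
      then show "S - T \<subseteq> V - T \<and> card (S - T) = card S - j" using S assms by auto
    qed
    show "(\<lambda>U. U \<union> T) ` {U. U \<subseteq> V - T \<and> card U = k - j} \<subseteq> {S. S \<subseteq> V \<and> card S = k \<and> T \<subseteq> S}"
    proof clarify
      fix U assume U: "U \<subseteq> V - T" "card U = k - j"
      have fU: "finite U" using U assms finite_subset by blast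
      have "card (U \<union> T) = card U + card T" using U fU fT by (intro card_Un_disjoint) auto
      then show "U \<union> T \<subseteq> V \<and> card (U \<union> T) = k \<and> T \<subseteq> U \<union> T" using U assms by auto
    qed
  qed
  then have "card {S. S \<subseteq> V \<and> card S = k \<and> T \<subseteq> S} = card {U. U \<subseteq> V - T \<and> card U = k - j}"
    by (rule bij_betw_same_card)
  also have "\<dots> = card (V - T) choose (k - j)" using assms by (intro n_subsets) auto
  also have "card (V - T) = card V - j" using assms fT by (simp add: card_Diff_subset)
  finally show ?thesis .
qed

lemma count_bound:
  assumes "finite V" "T \<subseteq> V" "card T = j" "k \<le> card V"
  shows "real (card {S. S \<subseteq> V \<and> card S = k \<and> T \<subseteq> S}) \<le> (real k / real (card V)) ^ j * real (card V choose k)"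
proof (cases "j \<le> k")
  case False
  have e: "{S. S \<subseteq> V \<and> card S = k \<and> T \<subseteq> S} = {}"
  proof (rule ccontr)
    assume "{S. S \<subseteq> V \<and> card S = k \<and> T \<subseteq> S} \<noteq> {}"
    then obtain S where S: "S \<subseteq> V" "card S = k" "T \<subseteq> S" by blast
    have "finite S" using S assms finite_subset by blast
    then have "card T \<le> card S" using S card_mono by blast
    then show False using S assms False by simp
  qed
  show ?thesis unfolding e by simp
next
  case True
  let ?n = "card V"
  have c: "card {S. S \<subseteq> V \<and> card S = k \<and> T \<subseteq> S} = (?n - j) choose (k - j)"
    using count_superset assms True by blast
  have r: "real ((?n - j) choose (k - j)) * real ?n ^ j \<le> real k ^ j * real (?n choose k)"
    using choose_ratio[OF True assms(4)] by (metis of_nat_le_iff of_nat_mult of_nat_power)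
  show ?thesis
  proof (cases "?n = 0")
    case True then show ?thesis using assms \<open>j \<le> k\<close> c by simp
  next
    case False
    then have p: "real ?n ^ j > 0" by simp
    have "real ((?n - j) choose (k - j)) \<le> real k ^ j * real (?n choose k) / real ?n ^ j"
      using r p by (simp add: pos_le_divide_eq)
    then show ?thesis using c by (simp add: power_divide)
  qed
qed

lemma card_filter_sum:
  assumes "finite A"
  shows "card {x\<in>A. P x} = (\<Sum>x\<in>A. if P x then 1 else 0)"
proof -
  have "card {x\<in>A. P x} = (\<Sum>x\<in>{x\<in>A. P x}. (1::nat))" by simp
  also have "\<dots> = (\<Sum>x\<in>A. if P x then 1 else 0)" using assms by (rule sum.inter_filter)
  finally show ?thesis .
qed

lemma double_count:
  assumes "finite A" "finite B"
  shows "(\<Sum>S\<in>A. card {T\<in>B. T \<subseteq> S}) = (\<Sum>T\<in>B. card {S\<in>A. T \<subseteq> S})"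
proof -
  have "(\<Sum>S\<in>A. card {T\<in>B. T \<subseteq> S}) = (\<Sum>S\<in>A. \<Sum>T\<in>B. if T \<subseteq> S then 1 else 0)"
    using assms by (simp add: card_filter_sum)
  also have "\<dots> = (\<Sum>T\<in>B. \<Sum>S\<in>A. if T \<subseteq> S then 1 else 0)" by (rule sum.swap)
  also have "\<dots> = (\<Sum>T\<in>B. card {S\<in>A. T \<subseteq> S})"
    using assms by (simp add: card_filter_sum)
  finally show ?thesis .
qed

lemma choose_ratio_bound:
  fixes D s j :: nat and \<phi> :: real
  assumes "\<phi> > 0" "j \<le> s" "\<phi> * real D \<le> real s" "j \<ge> 1"
  shows "real (D choose j) \<le> (real j / \<phi>) ^ j * real (s choose j)"
proof (cases "j \<le> D")
  case False
  have "D choose j = 0" using False by simp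
  moreover have "0 \<le> (real j / \<phi>) ^ j * real (s choose j)" using assms by simp
  ultimately show ?thesis by (simp only: of_nat_0)
next
  case True
  have "real (D choose j) \<le> real D ^ j" using binomial_le_pow[OF True] by (metis of_nat_le_iff of_nat_power)
  also have "\<dots> \<le> (real s / \<phi>) ^ j"
    using assms by (intro power_mono) (auto simp: pos_le_divide_eq mult.commute)
  also have "\<dots> = (real j / \<phi>) ^ j * (real s / real j) ^ j"
    using assms by (simp add: power_mult_distrib[symmetric])
  also have "\<dots> \<le> (real j / \<phi>) ^ j * real (s choose j)"
    using assms by (intro mult_left_mono binomial_ge_n_over_k_pow_k) auto
  finally show ?thesis .
qed

lemma vertex_bound:
  fixes V N :: "'a set" and \<phi> :: real and j k D :: nat
  assumes fin: "finite V" and NV: "N \<subseteq> V" and cardN: "card N = D" and phi: "\<phi> > 0"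
    and j1: "j \<ge> 1" and kn: "k \<le> card V"
    and hj: "\<And>s. \<phi> * real D \<le> real s \<Longrightarrow> j \<le> s"
  shows "real (card {S. S \<subseteq> V \<and> card S = k \<and> \<phi> * real D \<le> real (card (N \<inter> S))})
     \<le> (real j / \<phi>) ^ j * ((real k / real (card V)) ^ j * real (card V choose k))"
proof -
  define B where "B = {S. S \<subseteq> V \<and> card S = k \<and> \<phi> * real D \<le> real (card (N \<inter> S))}"
  define A where "A = {S. S \<subseteq> V \<and> card S = k}"
  define TS where "TS = {T. T \<subseteq> N \<and> card T = j}"
  define K where "K = (real j / \<phi>) ^ j"
  define R where "R = (real k / real (card V)) ^ j * real (card V choose k)"
  have K0: "K \<ge> 0" using phi K_def by simp
  have R0: "R \<ge> 0" using R_def by simp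
  have fN: "finite N" using fin NV finite_subset by blast
  have fA: "finite A" unfolding A_def using fin by (rule rev_finite_subset[OF finite_Pow_iff[THEN iffD2]]) auto
  have fTS: "finite TS" unfolding TS_def using fN by (rule rev_finite_subset[OF finite_Pow_iff[THEN iffD2]]) auto
  have BA: "B \<subseteq> A" unfolding A_def B_def by blast
  have fB: "finite B" using fA BA finite_subset by blast
  show ?thesis
  proof (cases "B = {}")
    case True
    then show ?thesis using K0 R0 unfolding B_def[symmetric] K_def[symmetric] R_def[symmetric] by simp
  next
    case False
    then obtain S0 where S0: "S0 \<in> B" by blast
    have "j \<le> card (N \<inter> S0)" using S0 hj unfolding B_def by blast
    also have "\<dots> \<le> D" using cardN fN card_mono[of N "N \<inter> S0"] by auto
    finally have jD: "j \<le> D" .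
    have cTS: "card TS = D choose j" unfolding TS_def using n_subsets[OF fN] cardN by simp
    have Cpos: "real (D choose j) > 0" using jD by simp
    have each: "real (D choose j) \<le> K * real (card {T\<in>TS. T \<subseteq> S})" if S: "S \<in> B" for S
    proof -
      have sj: "j \<le> card (N \<inter> S)" and sD: "\<phi> * real D \<le> real (card (N \<inter> S))"
        using S hj unfolding B_def by auto
      have "{T\<in>TS. T \<subseteq> S} = {T. T \<subseteq> N \<inter> S \<and> card T = j}" unfolding TS_def by blast
      moreover have "finite (N \<inter> S)" using fN by simp
      ultimately have "card {T\<in>TS. T \<subseteq> S} = card (N \<inter> S) choose j"
        using n_subsets[of "N \<inter> S" j] by simp
      then show ?thesis using choose_ratio_bound[OF phi sj sD j1] K_def by simp
    qed
    have "real (card B) * real (D choose j) = (\<Sum>S\<in>B. real (D choose j))" by simp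
    also have "\<dots> \<le> (\<Sum>S\<in>B. K * real (card {T\<in>TS. T \<subseteq> S}))" using each by (rule sum_mono)
    also have "\<dots> = K * real (\<Sum>S\<in>B. card {T\<in>TS. T \<subseteq> S})" by (simp add: sum_distrib_left)
    also have "\<dots> \<le> K * real (\<Sum>S\<in>A. card {T\<in>TS. T \<subseteq> S})"
      using K0 fA BA by (intro mult_left_mono) (auto intro: sum_mono2)
    also have "(\<Sum>S\<in>A. card {T\<in>TS. T \<subseteq> S}) = (\<Sum>T\<in>TS. card {S\<in>A. T \<subseteq> S})"
      using fA fTS by (rule double_count)
    also have "real (\<Sum>T\<in>TS. card {S\<in>A. T \<subseteq> S}) \<le> (\<Sum>T\<in>TS. R)"
    proof -
      have "real (card {S\<in>A. T \<subseteq> S}) \<le> R" if T: "T \<in> TS" for T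
      proof -
        have e: "{S\<in>A. T \<subseteq> S} = {S. S \<subseteq> V \<and> card S = k \<and> T \<subseteq> S}" unfolding A_def by blast
        have "T \<subseteq> V" "card T = j" using T NV unfolding TS_def by auto
        then show ?thesis unfolding e R_def using count_bound[OF fin _ _ kn] by blast
      qed
      then have "(\<Sum>T\<in>TS. real (card {S\<in>A. T \<subseteq> S})) \<le> (\<Sum>T\<in>TS. R)" by (rule sum_mono)
      then show ?thesis by simp
    qed
    then have "K * real (\<Sum>T\<in>TS. card {S\<in>A. T \<subseteq> S}) \<le> K * (real (D choose j) * R)"
      using K0 cTS by (intro mult_left_mono) auto
    finally have "real (card B) * real (D choose j) \<le> (K * R) * real (D choose j)" by (simp add: mult_ac)
    then have "real (card B) \<le> K * R" using Cpos by simp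
    then show ?thesis unfolding B_def K_def R_def .
  qed
qed



lemma not_spread_witness:
  assumes "infected V E \<phi> S \<noteq> S"
  shows "\<exists>v\<in>V. \<phi> * real (degree V E v) \<le> real (card (nbrs V E v \<inter> S))"
proof (rule ccontr)
  assume "\<not> ?thesis"
  then have st: "cascade_step V E \<phi> S = S" unfolding cascade_step_def by auto
  have "(cascade_step V E \<phi> ^^ i) S = S" for i by (induction i) (simp_all add: st)
  then have "infected V E \<phi> S = S" unfolding infected_def by simp
  then show False using assms by simp
qed

lemma bad_bound:
  fixes V :: "'a set" and E \<phi> and d l k :: nat
  assumes fin: "finite V" and md: "\<forall>v\<in>V. d \<le> degree V E v" and d1: "d \<ge> 1"
    and phi: "\<phi> > real l / real d" and kn: "k \<le> card V"
  shows "real (card {S. S \<subseteq> V \<and> card S = k \<and> infected V E \<phi> S \<noteq> S})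
    \<le> real (card V) * ((real (l+1) / \<phi>) ^ (l+1) * ((real k / real (card V)) ^ (l+1) * real (card V choose k)))"
proof -
  define Q where "Q = (real (l+1) / \<phi>) ^ (l+1) * ((real k / real (card V)) ^ (l+1) * real (card V choose k))"
  define Bv where "Bv = (\<lambda>v. {S. S \<subseteq> V \<and> card S = k \<and> \<phi> * real (degree V E v) \<le> real (card (nbrs V E v \<inter> S))})"
  have phi0: "\<phi> > 0" using phi
  proof -
    have "real l / real d \<ge> 0" by simp
    then show ?thesis using phi by linarith
  qed
  have sub: "{S. S \<subseteq> V \<and> card S = k \<and> infected V E \<phi> S \<noteq> S} \<subseteq> (\<Union>v\<in>V. Bv v)"
  proof
    fix S assume "S \<in> {S. S \<subseteq> V \<and> card S = k \<and> infected V E \<phi> S \<noteq> S}"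
    then have S: "S \<subseteq> V" "card S = k" "infected V E \<phi> S \<noteq> S" by auto
    obtain v where "v \<in> V" "\<phi> * real (degree V E v) \<le> real (card (nbrs V E v \<inter> S))"
      using not_spread_witness[OF S(3)] by blast
    then show "S \<in> (\<Union>v\<in>V. Bv v)" using S unfolding Bv_def by blast
  qed
  have fB: "finite (Bv v)" for v
    unfolding Bv_def using fin by (rule rev_finite_subset[OF finite_Pow_iff[THEN iffD2]]) auto
  have "card {S. S \<subseteq> V \<and> card S = k \<and> infected V E \<phi> S \<noteq> S} \<le> card (\<Union>v\<in>V. Bv v)"
    by (rule card_mono[OF _ sub]) (simp add: fin fB)
  also have "\<dots> \<le> (\<Sum>v\<in>V. card (Bv v))" using fin by (rule card_UN_le)
  finally have c1: "real (card {S. S \<subseteq> V \<and> card S = k \<and> infected V E \<phi> S \<noteq> S}) \<le> (\<Sum>v\<in>V. real (card (Bv v)))"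
    unfolding of_nat_sum[symmetric] of_nat_le_iff .
  have each: "real (card (Bv v)) \<le> Q" if v: "v \<in> V" for v
  proof -
    define D where "D = degree V E v"
    have dD: "d \<le> D" using md v D_def by simp
    have NV: "nbrs V E v \<subseteq> V" unfolding nbrs_def by auto
    have hj: "l + 1 \<le> s" if s: "\<phi> * real D \<le> real s" for s
    proof -
      have "real l = real l / real d * real d" using d1 by simp
      also have "\<dots> \<le> real l / real d * real D" using dD by (intro mult_left_mono) auto
      also have "\<dots> < \<phi> * real D" using phi dD d1 by (intro mult_strict_right_mono) auto
      finally show ?thesis using s by linarith
    qed
    have cN: "card (nbrs V E v) = D" unfolding D_def degree_def ..
    have "real (card (Bv v)) = real (card {S. S \<subseteq> V \<and> card S = k \<and> \<phi> * real D \<le> real (card (nbrs V E v \<inter> S))})"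
      unfolding Bv_def D_def ..
    also have "\<dots> \<le> Q" unfolding Q_def
      by (rule vertex_bound[OF fin NV cN phi0 _ kn hj]) simp
    finally show ?thesis .
  qed
  have "(\<Sum>v\<in>V. real (card (Bv v))) \<le> (\<Sum>v\<in>V. Q)" using each by (rule sum_mono)
  with c1 show ?thesis unfolding Q_def by simp
qed

theorem theorem8:
  fixes E :: "nat \<Rightarrow> nat \<Rightarrow> nat \<Rightarrow> bool"
    and d l :: nat and \<phi> :: real and k :: "nat \<Rightarrow> nat"
  assumes graphs: "\<forall>\<^sub>F n in sequentially. simple_graph {..<n} (E n) \<and> min_degree {..<n} (E n) d"
    and l_range: "1 \<le> l" "l \<le> d - 1"
    and phi: "\<phi> > real l / real d"
    and k_small: "(\<lambda>n. real (k n)) \<in> o(\<lambda>n. real n powr (real l / real (l + 1)))"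
  shows "(\<lambda>n. no_spread_prob {..<n} (E n) \<phi> (k n)) \<longlonglongrightarrow> 1"
proof -
  define j where "j = l + 1"
  define K where "K = (real j / \<phi>) ^ j"
  have d1: "d \<ge> 1" using l_range by linarith
  have phi0: "\<phi> > 0"
  proof -
    have "real l / real d \<ge> 0" by simp
    then show ?thesis using phi by linarith
  qed
  have "(\<lambda>n. real (k n) ^ j) \<in> o(\<lambda>n. (real n powr (real l / real (l + 1))) ^ j)"
    using k_small j_def by (intro landau_o.small_power) auto
  then have g0: "(\<lambda>n. real (k n) ^ j / (real n powr (real l / real (l + 1))) ^ j) \<longlonglongrightarrow> 0"
    by (rule smalloD_tendsto)
  have ev_eq: "\<forall>\<^sub>F n in sequentially. real (k n) ^ j / (real n powr (real l / real (l + 1))) ^ j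
      = real (k n) ^ j / real n ^ l"
  proof (rule eventually_mono[OF eventually_gt_at_top[of 0]])
    fix n :: nat assume n: "n > 0"
    have "(real n powr (real l / real (l + 1))) ^ j = real n powr (real j * (real l / real (l + 1)))"
      using n by (simp add: powr_power)
    also have "real j * (real l / real (l + 1)) = real l" unfolding j_def by simp
    also have "real n powr real l = real n ^ l" using n by (simp add: powr_realpow)
    finally show "real (k n) ^ j / (real n powr (real l / real (l + 1))) ^ j = real (k n) ^ j / real n ^ l"
      by simp
  qed
  have g: "(\<lambda>n. real (k n) ^ j / real n ^ l) \<longlonglongrightarrow> 0"
    using g0 tendsto_cong[OF ev_eq] by simp
  have ev_small: "\<forall>\<^sub>F n in sequentially. real (k n) ^ j / real n ^ l < 1"
    using g by (rule order_tendstoD) simp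
  have ev_kn: "\<forall>\<^sub>F n in sequentially. k n \<le> n"
  proof (rule eventually_mono[OF eventually_conj[OF ev_small eventually_gt_at_top[of 0]]])
    fix n assume a: "real (k n) ^ j / real n ^ l < 1 \<and> 0 < n"
    have "real n ^ l > 0" using a by simp
    moreover have "real (k n) ^ j / real n ^ l < 1" using a by blast
    ultimately have "real (k n) ^ j < real n ^ l" using divide_less_eq_1_pos by blast
    also have "\<dots> \<le> real n ^ j" using a j_def by (intro power_increasing) auto
    finally have "real (k n) < real n" using power_less_imp_less_base by fastforce
    then show "k n \<le> n" by simp
  qed
  define P where "P = (\<lambda>n. no_spread_prob {..<n} (E n) \<phi> (k n))"
  have bound: "\<forall>\<^sub>F n in sequentially. 0 \<le> 1 - P n \<and> 1 - P n \<le> K * (real (k n) ^ j / real n ^ l)"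
  proof (rule eventually_mono[OF eventually_conj[OF eventually_conj[OF graphs ev_kn] eventually_gt_at_top[of 0]]])
    fix n :: nat
    assume a0: "((simple_graph {..<n} (E n) \<and> min_degree {..<n} (E n) d) \<and> k n \<le> n) \<and> 0 < n"
    then have a: "simple_graph {..<n} (E n) \<and> min_degree {..<n} (E n) d \<and> k n \<le> n \<and> 0 < n" by blast
    let ?V = "{..<n::nat}"
    define A where "A = {S. S \<subseteq> ?V \<and> card S = k n}"
    define G where "G = {S. S \<subseteq> ?V \<and> card S = k n \<and> infected ?V (E n) \<phi> S = S}"
    define B where "B = {S. S \<subseteq> ?V \<and> card S = k n \<and> infected ?V (E n) \<phi> S \<noteq> S}"
    have md: "\<forall>v\<in>?V. d \<le> degree ?V (E n) v" using a unfolding min_degree_def by blast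
    have cA: "card A = n choose k n" unfolding A_def using n_subsets[of ?V "k n"] by simp
    have Apos: "real (card A) > 0" using cA a by simp
    have fA: "finite A" unfolding A_def by (rule rev_finite_subset[OF finite_Pow_iff[THEN iffD2, of ?V]]) auto
    have AGB: "A = G \<union> B" "G \<inter> B = {}" unfolding A_def G_def B_def by auto
    have cAGB: "card A = card G + card B"
      using AGB fA by (metis card_Un_disjoint finite_Un)
    have PG: "P n = real (card G) / real (card A)"
      unfolding P_def no_spread_prob_def G_def A_def ..
    have "1 - P n = real (card B) / real (card A)"
      using PG cAGB Apos by (simp add: field_simps)
    moreover have "real (card B) \<le> real n * (K * ((real (k n) / real n) ^ j * real (card A)))"
      using bad_bound[of ?V d "E n" l \<phi> "k n"] md d1 phi a cA
      unfolding B_def K_def j_def by simp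
    moreover have "real n * (K * ((real (k n) / real n) ^ j * real (card A)))
        = K * (real (k n) ^ j / real n ^ l) * real (card A)"
      using a unfolding j_def by (simp add: power_divide field_simps)
    ultimately show "0 \<le> 1 - P n \<and> 1 - P n \<le> K * (real (k n) ^ j / real n ^ l)"
      using Apos by (simp add: divide_le_eq)
  qed
  have "(\<lambda>n. K * (real (k n) ^ j / real n ^ l)) \<longlonglongrightarrow> K * 0"
    by (intro tendsto_mult tendsto_const g)
  then have Klim: "(\<lambda>n. K * (real (k n) ^ j / real n ^ l)) \<longlonglongrightarrow> 0" by simp
  have "(\<lambda>n. 1 - P n) \<longlonglongrightarrow> 0"
  proof (rule tendsto_sandwich[OF _ _ tendsto_const Klim])
    show "\<forall>\<^sub>F n in sequentially. 0 \<le> 1 - P n" using bound by (rule eventually_mono) (rule conjunct1)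
    show "\<forall>\<^sub>F n in sequentially. 1 - P n \<le> K * (real (k n) ^ j / real n ^ l)"
      using bound by (rule eventually_mono) (rule conjunct2)
  qed
  then have "(\<lambda>n. 1 - (1 - P n)) \<longlonglongrightarrow> 1 - 0" by (intro tendsto_diff tendsto_const)
  then show ?thesis unfolding P_def by simp
qed

end
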